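(* Let $a,b,c,d$ be integers with $1=a\le b\le c\le d$ and let $$M=\begin{bmatrix}a&-1&-1&-1\\-1&b&-1&-1\\-1&-1&c&-1\\-1&-1&-1&d\end{bmatrix}.$$ If $\det M=0$, then $b\le5$. Moreover: if $b=3$ and $c\ge7$, then $c=d=7$; if $b=4$, then $c=4$ and $d=9$; if $b=5$, then $c=d=5$. *)

theory Defs
  imports "HOL-Analysis.Analysis"
begin

definition diag_minus_one_mat :: "int \<Rightarrow> int \<Rightarrow> int \<Rightarrow> int \<Rightarrow> int^4^4" where
  "diag_minus_one_mat a b c d =
     (\<chi> i j. if i = j then (if i = 1 then a else if i = 2 then b else if i = 3 then c else d)
             else -1)"

end

theory Submission imports Defs begin

lemma detM:
  "det (diag_minus_one_mat a b c d) = (a+1)*(b+1)*(c+1)*(d+1) - ((a+1)*(b+1)*(c+1)+(a+1)*(b+1)*(d+1)+(a+1)*(c+1)*(d+1)+(b+1)*(c+1)*(d+1))"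
proof -
  have f1: "finite {2::4, 3, 4}" "1 \<notin> {2::4, 3, 4}" by auto
  have f2: "finite {3::4, 4}" "2 \<notin> {3::4, 4}" by auto
  have f3: "finite {4::4}" "3 \<notin> {4::4}" by auto
  show ?thesis
    unfolding det_def UNIV_4
    unfolding sum_over_permutations_insert[OF f1]
    unfolding sum_over_permutations_insert[OF f2]
    unfolding sum_over_permutations_insert[OF f3]
    unfolding permutes_sing
    by (simp add: sign_swap_id permutation_swap_id sign_compose permutation_compose sign_id swap_id_eq diag_minus_one_mat_def algebra_simps)
qed

theorem lemma3p7:
  fixes a b c d :: int
  assumes "1 = a" and "a \<le> b" and "b \<le> c" and "c \<le> d"
    and "det (diag_minus_one_mat a b c d) = 0"
  shows "b \<le> 5
    \<and> (b = 3 \<and> c \<ge> 7 \<longrightarrow> c = 7 \<and> d = 7)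
    \<and> (b = 4 \<longrightarrow> c = 4 \<and> d = 9)
    \<and> (b = 5 \<longrightarrow> c = 5 \<and> d = 5)"
proof -
  define x where "x = b + 1"
  define y where "y = c + 1"
  define z where "z = d + 1"
  have E: "x*y*z = 2*(x*y + x*z + y*z)"
    using assms(5) unfolding detM x_def y_def z_def using assms(1) by (simp add: algebra_simps)
  have xy: "2 \<le> x" "x \<le> y" "y \<le> z" using assms x_def y_def z_def by auto
  have yz: "y*z \<ge> 0" using xy by simp
  have b5: "x \<le> 6"
  proof (rule ccontr)
    assume "\<not> x \<le> 6"
    hence "x*(y*z) \<ge> 7*(y*z)" using yz by (intro mult_right_mono) auto
    moreover have "x*y \<le> z*y" "x*z \<le> y*z" using xy by (intro mult_right_mono; simp)+
    moreover have "y*z > 0" using xy by simp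
    ultimately show False using E by (simp add: algebra_simps)
  qed
  have c3: "x = 4 \<Longrightarrow> y \<ge> 8 \<Longrightarrow> y = 8 \<and> z = 8"
  proof -
    assume h: "x = 4" "y \<ge> 8"
    hence E': "y*z = 4*y + 4*z" using E by simp
    have "y \<le> 8"
    proof (rule ccontr)
      assume "\<not> y \<le> 8"
      hence "y*z \<ge> 9*z" using xy by (intro mult_right_mono) auto
      thus False using E' xy by linarith
    qed
    thus ?thesis using h E' by simp
  qed
  have c4: "x = 5 \<Longrightarrow> y = 5 \<and> z = 10"
  proof -
    assume h: "x = 5"
    hence E': "3*(y*z) = 10*y + 10*z" using E by simp
    have "y \<le> 6"
    proof (rule ccontr)
      assume "\<not> y \<le> 6"
      hence "y*z \<ge> 7*z" using xy by (intro mult_right_mono) auto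
      thus False using E' xy by linarith
    qed
    moreover have "y \<ge> 5" using h xy by simp
    ultimately have "y = 5 \<or> y = 6" by auto
    thus ?thesis using h E' by presburger
  qed
  have c5: "x = 6 \<Longrightarrow> y = 6 \<and> z = 6"
  proof -
    assume h: "x = 6"
    hence E': "y*z = 3*y + 3*z" using E by simp
    have "y \<le> 6"
    proof (rule ccontr)
      assume "\<not> y \<le> 6"
      hence "y*z \<ge> 7*z" using xy by (intro mult_right_mono) auto
      thus False using E' xy by linarith
    qed
    thus ?thesis using h E' xy by simp
  qed
  show ?thesis using b5 c3 c4 c5 x_def y_def z_def by auto
qed
end
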